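(* Let $\mathbf G\in\mathbb R^{d\times d}_{\rm sym}$ with eigenvalues $g_1,\dots,g_d$, and let $f$ be a real function defined in a neighbourhood of $\{\frac{g_i-g_j}2\}_{i,j=1}^d$. Decompose $f=f_0+f_{\rm odd}+f_{\rm even}$ with $f_0:=f(0)$, $f_{\rm odd}(x):=\frac{f(x)-f(-x)}2$, $f_{\rm even}(x):=\frac{f(x)+f(-x)}2-f(0)$. Then for all $\mathbf X\in\mathbb R^{d\times d}$: (i) If $d=1$, or if all eigenvalues coincide, $f(\mathsf{Ad}_{\mathbf G})\mathbf X=f_0\mathbf X$. (ii) If $d=2$ and $g_1\ne g_2$, $f(\mathsf{Ad}_{\mathbf G})\mathbf X=f_0\mathbf X+\frac{f_{\rm odd}(\frac{g_1-g_2}2)}{g_1-g_2}(\mathbf G\mathbf X-\mathbf X\mathbf G)+\frac{f_{\rm even}(\frac{g_1-g_2}2)}{(g_1-g_2)^2}\big(-2g_1g_2\mathbf X+(g_1+g_2)(\mathbf G\mathbf X+\mathbf X\mathbf G)-2\mathbf G\mathbf X\mathbf G\big).$ (iii) If $d=3$ and $g_1,g_2,g_3$ are pairwise distinct, $f(\mathsf{Ad}_{\mathbf G})\mathbf X=-K_2(\mathbf G\mathbf X-\mathbf X\mathbf G)+K_1(\mathbf G^2\mathbf X-\mathbf X\mathbf G^2)-K_0(\mathbf G^2\mathbf X\mathbf G-\mathbf G\mathbf X\mathbf G^2)+(f_0+2J_3L_1)\mathbf X-(J_2L_1+J_3L_0)(\mathbf G\mathbf X+\mathbf X\mathbf G)+2(L_2+J_2L_0)\mathbf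 G\mathbf X\mathbf G+(J_1L_1-L_2)(\mathbf G^2\mathbf X+\mathbf X\mathbf G^2)-(L_1+J_1L_0)(\mathbf G^2\mathbf X\mathbf G+\mathbf G\mathbf X\mathbf G^2)+2L_0\mathbf G^2\mathbf X\mathbf G^2,$ where $J_1=g_1+g_2+g_3$, $J_2=g_1g_2+g_2g_3+g_3g_1$, $J_3=g_1g_2g_3$ and, for $n=0,1,2$, $K_n=\frac{g_1^nf_{\rm odd}(\frac{g_2-g_3}2)+g_2^nf_{\rm odd}(\frac{g_3-g_1}2)+g_3^nf_{\rm odd}(\frac{g_1-g_2}2)}{(g_1-g_2)(g_2-g_3)(g_3-g_1)}$, $L_n=\frac{g_1^n\frac{f_{\rm even}((g_2-g_3)/2)}{g_2-g_3}+g_2^n\frac{f_{\rm even}((g_3-g_1)/2)}{g_3-g_1}+g_3^n\frac{f_{\rm even}((g_1-g_2)/2)}{g_1-g_2}}{(g_1-g_2)(g_2-g_3)(g_3-g_1)}$. If $d=3$ and exactly two eigenvalues are distinct, the formula in (ii) holds (with the indices relabelled so that $g_1\ne g_2$ denote the two distinct eigenvalues).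
   Context: For $\mathbf G\in\mathbb R^{d\times d}$, $\mathsf{Ad}_{\mathbf G}\mathbf X=\tfrac12(\mathbf G\mathbf X-\mathbf X\mathbf G)$ on $\mathbb R^{d\times d}$. For $\mathbf G\in\mathbb R^{d\times d}_{\rm sym}$ write $\mathbf G=\mathbf Q\operatorname{diag}(g_1,\dots,g_d)\mathbf Q^{\mathsf T}$ with $\mathbf Q$ orthogonal. For a function $h$ defined near the points $\frac{g_i-g_j}2$, $h(\mathsf{Ad}_{\mathbf G})\mathbf X:=\mathbf Q\big([h(\frac{g_i-g_j}2)]\odot(\mathbf Q^{\mathsf T}\mathbf X\mathbf Q)\big)\mathbf Q^{\mathsf T}$, where $[m_{ij}]$ is the matrix with entries $m_{ij}$, $\odot$ the entrywise product, and removable discontinuities of $h$ are replaced by limits. *)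

theory Defs
  imports "HOL-Analysis.Analysis"
begin

definition diagm :: "real^'n \<Rightarrow> real^'n^'n" where
  "diagm g = (\<chi> i j. if i = j then g $ i else 0)"

text \<open>h(Ad_G) X, computed from an orthogonal diagonalisation G = Q diag(g) Q^T:
  Q ([h((g_i - g_j)/2)] \<odot> (Q^T X Q)) Q^T.\<close>
definition fAd :: "(real \<Rightarrow> real) \<Rightarrow> real^'n^'n \<Rightarrow> real^'n \<Rightarrow> real^'n^'n \<Rightarrow> real^'n^'n" where
  "fAd h Q g X = Q ** (\<chi> i j. h ((g $ i - g $ j) / 2) * ((transpose Q ** X ** Q) $ i $ j)) ** transpose Q"

definition fodd :: "(real \<Rightarrow> real) \<Rightarrow> real \<Rightarrow> real" where
  "fodd f x = (f x - f (- x)) / 2"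

definition feven :: "(real \<Rightarrow> real) \<Rightarrow> real \<Rightarrow> real" where
  "feven f x = (f x + f (- x)) / 2 - f 0"

definition formula2 :: "(real \<Rightarrow> real) \<Rightarrow> real \<Rightarrow> real \<Rightarrow> real^'n^'n \<Rightarrow> real^'n^'n \<Rightarrow> real^'n^'n" where
  "formula2 f a b G X =
     f 0 *\<^sub>R X
   + (fodd f ((a - b) / 2) / (a - b)) *\<^sub>R (G ** X - X ** G)
   + (feven f ((a - b) / 2) / (a - b)^2) *\<^sub>R
        ((- 2 * a * b) *\<^sub>R X + (a + b) *\<^sub>R (G ** X + X ** G) - 2 *\<^sub>R (G ** X ** G))"

definition Kc :: "(real \<Rightarrow> real) \<Rightarrow> real \<Rightarrow> real \<Rightarrow> real \<Rightarrow> nat \<Rightarrow> real" where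
  "Kc f g1 g2 g3 n =
     (g1^n * fodd f ((g2 - g3) / 2) + g2^n * fodd f ((g3 - g1) / 2) + g3^n * fodd f ((g1 - g2) / 2))
     / ((g1 - g2) * (g2 - g3) * (g3 - g1))"

definition Lc :: "(real \<Rightarrow> real) \<Rightarrow> real \<Rightarrow> real \<Rightarrow> real \<Rightarrow> nat \<Rightarrow> real" where
  "Lc f g1 g2 g3 n =
     (g1^n * (feven f ((g2 - g3) / 2) / (g2 - g3)) + g2^n * (feven f ((g3 - g1) / 2) / (g3 - g1))
      + g3^n * (feven f ((g1 - g2) / 2) / (g1 - g2)))
     / ((g1 - g2) * (g2 - g3) * (g3 - g1))"

definition formula3 :: "(real \<Rightarrow> real) \<Rightarrow> real \<Rightarrow> real \<Rightarrow> real \<Rightarrow> real^'n^'n \<Rightarrow> real^'n^'n \<Rightarrow> real^'n^'n" where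
  "formula3 f g1 g2 g3 G X =
    (let J1 = g1 + g2 + g3; J2 = g1 * g2 + g2 * g3 + g3 * g1; J3 = g1 * g2 * g3;
         K0 = Kc f g1 g2 g3 0; K1 = Kc f g1 g2 g3 1; K2 = Kc f g1 g2 g3 2;
         L0 = Lc f g1 g2 g3 0; L1 = Lc f g1 g2 g3 1; L2 = Lc f g1 g2 g3 2;
         G2 = G ** G
     in - K2 *\<^sub>R (G ** X - X ** G)
        + K1 *\<^sub>R (G2 ** X - X ** G2)
        - K0 *\<^sub>R (G2 ** X ** G - G ** X ** G2)
        + (f 0 + 2 * J3 * L1) *\<^sub>R X
        - (J2 * L1 + J3 * L0) *\<^sub>R (G ** X + X ** G)
        + (2 * (L2 + J2 * L0)) *\<^sub>R (G ** X ** G)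
        + (J1 * L1 - L2) *\<^sub>R (G2 ** X + X ** G2)
        - (L1 + J1 * L0) *\<^sub>R (G2 ** X ** G + G ** X ** G2)
        + (2 * L0) *\<^sub>R (G2 ** X ** G2))"

end

theory Submission
  imports Defs
begin


definition phi :: "real^'n^'n \<Rightarrow> real^'n^'n \<Rightarrow> real^'n^'n" where
  "phi Q M = Q ** M ** transpose Q"

lemma phi_mult: assumes "orthogonal_matrix Q" shows "phi Q A ** phi Q B = phi Q (A ** B)"
proof -
  have "Q ** A ** transpose Q ** (Q ** B ** transpose Q) = Q ** A ** (transpose Q ** Q) ** B ** transpose Q"
    by (simp add: matrix_mul_assoc)
  also have "\<dots> = Q ** (A ** B) ** transpose Q" using assms
    by (simp add: orthogonal_matrix_def matrix_mul_rid matrix_mul_assoc)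
  finally show ?thesis by (simp add: phi_def)
qed

lemma mm_addr: "((A::real^'n^'n) + B) ** C = A ** C + B ** C"
  by (vector matrix_matrix_mult_def sum.distrib[symmetric] field_simps)
lemma mm_subr: "((A::real^'n^'n) - B) ** C = A ** C - B ** C"
  by (vector matrix_matrix_mult_def sum_subtractf[symmetric] field_simps)
lemma mm_subl: "(A::real^'n^'n) ** (B - C) = A ** B - A ** C"
  by (vector matrix_matrix_mult_def sum_subtractf[symmetric] field_simps)
lemma mm_negr: "(- (A::real^'n^'n)) ** C = - (A ** C)"
  by (vector matrix_matrix_mult_def sum_negf[symmetric])
lemma mm_negl: "(A::real^'n^'n) ** (- C) = - (A ** C)"
  by (vector matrix_matrix_mult_def sum_negf[symmetric])
lemma phi_add: "phi Q A + phi Q B = phi Q (A + B)"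
  by (simp add: phi_def matrix_add_ldistrib mm_addr)
lemma phi_sub: "phi Q A - phi Q B = phi Q (A - B)"
  by (simp add: phi_def mm_subl mm_subr)
lemma phi_scale: "c *\<^sub>R phi Q A = phi Q (c *\<^sub>R A)"
  by (simp add: phi_def scalar_matrix_assoc matrix_scalar_ac)
lemma phi_neg: "- phi Q A = phi Q (- A)"
  by (simp add: phi_def mm_negl mm_negr)

lemma phi_inv: assumes "orthogonal_matrix Q" shows "phi Q (transpose Q ** X ** Q) = X"
proof -
  have "Q ** (transpose Q ** X ** Q) ** transpose Q = (Q ** transpose Q) ** X ** (Q ** transpose Q)"
    by (simp add: matrix_mul_assoc)
  thus ?thesis using assms by (simp add: phi_def orthogonal_matrix_def matrix_mul_rid matrix_mul_lid)
qed

lemma phi_inj: assumes "orthogonal_matrix Q" "phi Q A = phi Q B" shows "A = B"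
proof -
  have "transpose Q ** phi Q A ** Q = A"
  proof -
    have "transpose Q ** (Q ** A ** transpose Q) ** Q = (transpose Q ** Q) ** A ** (transpose Q ** Q)"
      by (simp add: matrix_mul_assoc)
    thus ?thesis using assms by (simp add: phi_def orthogonal_matrix_def matrix_mul_rid matrix_mul_lid)
  qed
  moreover have "transpose Q ** phi Q B ** Q = B"
  proof -
    have "transpose Q ** (Q ** B ** transpose Q) ** Q = (transpose Q ** Q) ** B ** (transpose Q ** Q)"
      by (simp add: matrix_mul_assoc)
    thus ?thesis using assms by (simp add: phi_def orthogonal_matrix_def matrix_mul_rid matrix_mul_lid)
  qed
  ultimately show ?thesis using assms(2) by metis
qed

lemma diag_left[simp]: "(diagm g ** M) $ i $ j = g $ i * M $ i $ j"
  by (simp add: matrix_matrix_mult_def diagm_def if_distrib if_distribR sum.delta'[OF finite] cong: if_cong)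
lemma diag_right[simp]: "(M ** diagm g) $ i $ j = M $ i $ j * g $ j"
  by (simp add: matrix_matrix_mult_def diagm_def if_distrib if_distribR sum.delta'[OF finite] cong: if_cong)
lemma diag_diag[simp]: "diagm g ** diagm h = diagm (\<chi> i. g $ i * h $ i)"
  by (simp add: vec_eq_iff) (simp add: diagm_def)

lemma fAd_phi: "fAd h Q g X = phi Q (\<chi> i j. h ((g $ i - g $ j) / 2) * ((transpose Q ** X ** Q) $ i $ j))"
  by (simp add: fAd_def phi_def)



definition qq :: "real \<Rightarrow> real \<Rightarrow> real \<Rightarrow> real \<Rightarrow> real \<Rightarrow> real \<Rightarrow> real" where
  "qq g1 g2 g3 t x y = (let J1 = g1 + g2 + g3; J2 = g1 * g2 + g2 * g3 + g3 * g1; J3 = g1 * g2 * g3 in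
     2*J3*t - (J2*t + J3)*(x+y) + 2*(t^2 + J2)*x*y + (J1*t - t^2)*(x^2+y^2) - (t + J1)*(x^2*y+x*y^2) + 2*x^2*y^2)"

lemma qq_vals:
  "qq g1 g2 g3 g1 g1 g1 = 0" "qq g1 g2 g3 g2 g1 g1 = 0" "qq g1 g2 g3 g3 g1 g1 = 0"
  "qq g1 g2 g3 g1 g2 g2 = 0" "qq g1 g2 g3 g2 g2 g2 = 0" "qq g1 g2 g3 g3 g2 g2 = 0"
  "qq g1 g2 g3 g1 g3 g3 = 0" "qq g1 g2 g3 g2 g3 g3 = 0" "qq g1 g2 g3 g3 g3 g3 = 0"
  "qq g1 g2 g3 g1 g1 g2 = 0" "qq g1 g2 g3 g2 g1 g2 = 0" "qq g1 g2 g3 g3 g1 g2 = (g1-g2)^2*(g2-g3)*(g3-g1)"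
  "qq g1 g2 g3 g1 g2 g3 = (g2-g3)^2*(g3-g1)*(g1-g2)" "qq g1 g2 g3 g2 g2 g3 = 0" "qq g1 g2 g3 g3 g2 g3 = 0"
  "qq g1 g2 g3 g1 g3 g1 = 0" "qq g1 g2 g3 g2 g3 g1 = (g3-g1)^2*(g1-g2)*(g2-g3)" "qq g1 g2 g3 g3 g3 g1 = 0"
  "qq g1 g2 g3 g1 g2 g1 = 0" "qq g1 g2 g3 g2 g2 g1 = 0" "qq g1 g2 g3 g3 g2 g1 = (g1-g2)^2*(g2-g3)*(g3-g1)"
  "qq g1 g2 g3 g1 g3 g2 = (g2-g3)^2*(g3-g1)*(g1-g2)" "qq g1 g2 g3 g2 g3 g2 = 0" "qq g1 g2 g3 g3 g3 g2 = 0"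
  "qq g1 g2 g3 g1 g1 g3 = 0" "qq g1 g2 g3 g2 g1 g3 = (g3-g1)^2*(g1-g2)*(g2-g3)" "qq g1 g2 g3 g3 g1 g3 = 0"
  by (simp_all add: qq_def Let_def, algebra+)

lemma P_form:
  fixes g1 g2 g3 F0 o1 o2 o3 E1 E2 E3 D x y :: real
  assumes Dz: "D \<noteq> 0"
  defines "K \<equiv> \<lambda>n::nat. (g1^n * o1 + g2^n * o2 + g3^n * o3) / D"
  defines "L \<equiv> \<lambda>n::nat. (g1^n * E1 + g2^n * E2 + g3^n * E3) / D"
  defines "J1 \<equiv> g1 + g2 + g3" and "J2 \<equiv> g1 * g2 + g2 * g3 + g3 * g1" and "J3 \<equiv> g1 * g2 * g3"
  shows "- K 2 * (x-y) + K 1 * (x^2-y^2) - K 0 * (x^2*y - x*y^2) + (F0 + 2*J3*L 1)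
      - (J2*L 1+J3*L 0)*(x+y) + 2*(L 2+J2*L 0)*x*y + (J1*L 1-L 2)*(x^2+y^2)
      - (L 1+J1*L 0)*(x^2*y+x*y^2) + 2*L 0*x^2*y^2
   = F0 - (x-y)*(o1*(g1-x)*(g1-y) + o2*(g2-x)*(g2-y)+ o3*(g3-x)*(g3-y))/D
      + (E1*qq g1 g2 g3 g1 x y + E2*qq g1 g2 g3 g2 x y + E3 * qq g1 g2 g3 g3 x y)/D"
  unfolding K_def L_def J1_def J2_def J3_def qq_def Let_def
  by (simp add: field_simps power2_eq_square Dz)

lemma R_vals:
  fixes g1 g2 g3 F0 o1 o2 o3 E1 E2 E3 :: real
  assumes d: "g1 \<noteq> g2" "g2 \<noteq> g3" "g3 \<noteq> g1"
  assumes Dd: "D = (g1 - g2) * (g2 - g3) * (g3 - g1)"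
  defines "R \<equiv> \<lambda>x y. F0 - (x-y)*(o1*(g1-x)*(g1-y) + o2*(g2-x)*(g2-y) + o3*(g3-x)*(g3-y))/D
      + (E1*qq g1 g2 g3 g1 x y + E2*qq g1 g2 g3 g2 x y + E3 * qq g1 g2 g3 g3 x y)/D"
  shows "R g1 g1 = F0" "R g2 g2 = F0" "R g3 g3 = F0"
    "R g1 g2 = F0 + o3 + E3 * (g1 - g2)" "R g2 g1 = F0 - o3 + E3 * (g1 - g2)"
    "R g2 g3 = F0 + o1 + E1 * (g2 - g3)" "R g3 g2 = F0 - o1 + E1 * (g2 - g3)"
    "R g3 g1 = F0 + o2 + E2 * (g3 - g1)" "R g1 g3 = F0 - o2 + E2 * (g3 - g1)"
proof -
  have Dz: "D \<noteq> 0" using d by (simp add: Dd)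
  show "R g1 g1 = F0" "R g2 g2 = F0" "R g3 g3 = F0"
    "R g1 g2 = F0 + o3 + E3 * (g1 - g2)" "R g2 g1 = F0 - o3 + E3 * (g1 - g2)"
    "R g2 g3 = F0 + o1 + E1 * (g2 - g3)" "R g3 g2 = F0 - o1 + E1 * (g2 - g3)"
    "R g3 g1 = F0 + o2 + E2 * (g3 - g1)" "R g1 g3 = F0 - o2 + E2 * (g3 - g1)"
    unfolding R_def using Dz by (simp_all add: qq_vals field_simps power2_eq_square) (simp_all only: Dd, algebra+)
qed

definition C3 :: "(real \<Rightarrow> real) \<Rightarrow> real \<Rightarrow> real \<Rightarrow> real \<Rightarrow> real \<Rightarrow> real \<Rightarrow> real" where
 "C3 f g1 g2 g3 x y =
    (let J1 = g1 + g2 + g3; J2 = g1 * g2 + g2 * g3 + g3 * g1; J3 = g1 * g2 * g3;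
         K0 = Kc f g1 g2 g3 0; K1 = Kc f g1 g2 g3 1; K2 = Kc f g1 g2 g3 2;
         L0 = Lc f g1 g2 g3 0; L1 = Lc f g1 g2 g3 1; L2 = Lc f g1 g2 g3 2
     in - K2 * (x-y) + K1 * (x^2-y^2) - K0 * (x^2*y - x*y^2) + (f 0 + 2*J3*L1)
      - (J2*L1+J3*L0)*(x+y) + 2*(L2+J2*L0)*x*y + (J1*L1-L2)*(x^2+y^2)
      - (L1+J1*L0)*(x^2*y+x*y^2) + 2*L0*x^2*y^2)"

lemma f_pos: "f t = f 0 + fodd f t + feven f t" by (simp add: fodd_def feven_def field_simps)
lemma f_neg: "f (-t) = f 0 - fodd f t + feven f t" by (simp add: fodd_def feven_def field_simps)

lemma C3_vals:
  fixes g1 g2 g3 :: real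
  assumes d: "g1 \<noteq> g2" "g2 \<noteq> g3" "g3 \<noteq> g1"
  assumes x: "x = g1 \<or> x = g2 \<or> x = g3" and y: "y = g1 \<or> y = g2 \<or> y = g3"
  shows "C3 f g1 g2 g3 x y = f ((x - y) / 2)"
proof -
  define D where "D = (g1 - g2) * (g2 - g3) * (g3 - g1)"
  have Dz: "D \<noteq> 0" using d by (simp add: D_def)
  define o1 where "o1 = fodd f ((g2 - g3) / 2)"
  define o2 where "o2 = fodd f ((g3 - g1) / 2)"
  define o3 where "o3 = fodd f ((g1 - g2) / 2)"
  define E1 where "E1 = feven f ((g2 - g3) / 2) / (g2 - g3)"
  define E2 where "E2 = feven f ((g3 - g1) / 2) / (g3 - g1)"
  define E3 where "E3 = feven f ((g1 - g2) / 2) / (g1 - g2)"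
  define R where "R \<equiv> \<lambda>x y. f 0 - (x-y)*(o1*(g1-x)*(g1-y) + o2*(g2-x)*(g2-y) + o3*(g3-x)*(g3-y))/D
      + (E1*qq g1 g2 g3 g1 x y + E2*qq g1 g2 g3 g2 x y + E3 * qq g1 g2 g3 g3 x y)/D"
  have C: "C3 f g1 g2 g3 x y = R x y"
    using P_form[OF Dz, of g1 o1 g2 o2 g3 o3 x y "f 0" E1 E2 E3]
    unfolding C3_def Kc_def Lc_def Let_def R_def o1_def o2_def o3_def E1_def E2_def E3_def D_def
    by simp
  note RV0 = R_vals[OF d D_def, of "f 0" o1 o2 o3 E1 E2 E3]
  have RV: "R g1 g1 = f 0" "R g2 g2 = f 0" "R g3 g3 = f 0"
    "R g1 g2 = f 0 + o3 + E3 * (g1 - g2)" "R g2 g1 = f 0 - o3 + E3 * (g1 - g2)"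
    "R g2 g3 = f 0 + o1 + E1 * (g2 - g3)" "R g3 g2 = f 0 - o1 + E1 * (g2 - g3)"
    "R g3 g1 = f 0 + o2 + E2 * (g3 - g1)" "R g1 g3 = f 0 - o2 + E2 * (g3 - g1)"
    unfolding R_def by (fact RV0)+
  have e1: "E1 * (g2 - g3) = feven f ((g2 - g3) / 2)" using d by (simp add: E1_def)
  have e2: "E2 * (g3 - g1) = feven f ((g3 - g1) / 2)" using d by (simp add: E2_def)
  have e3: "E3 * (g1 - g2) = feven f ((g1 - g2) / 2)" using d by (simp add: E3_def)
  have n: "(g2 - g1) / 2 = - ((g1 - g2) / 2)" "(g3 - g2) / 2 = - ((g2 - g3) / 2)" "(g1 - g3) / 2 = - ((g3 - g1) / 2)"
    by (simp_all add: field_simps)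
  show ?thesis using x y
    by (auto simp only: C RV e1 e2 e3 n f_neg o1_def o2_def o3_def diff_self div_0 f_pos[symmetric])
qed

definition C2 :: "(real \<Rightarrow> real) \<Rightarrow> real \<Rightarrow> real \<Rightarrow> real \<Rightarrow> real \<Rightarrow> real" where
  "C2 f a b x y = f 0 + fodd f ((a - b) / 2) / (a - b) * (x - y)
     + feven f ((a - b) / 2) / (a - b)^2 * (- 2 * a * b + (a + b) * (x + y) - 2 * x * y)"

lemma C2_vals:
  fixes a b :: real
  assumes d: "a \<noteq> b" and x: "x = a \<or> x = b" and y: "y = a \<or> y = b"
  shows "C2 f a b x y = f ((x - y) / 2)"
proof -
  have z: "a - b \<noteq> 0" using d by simp
  have n: "(b - a) / 2 = - ((a - b) / 2)" by (simp add: field_simps)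
  have e1: "feven f ((a - b) / 2) / (a - b)^2 * (- 2 * a * b + (a + b) * (a + b) - 2 * a * b) = feven f ((a - b) / 2)"
  proof -
    have "- 2 * a * b + (a + b) * (a + b) - 2 * a * b = (a - b)^2" by (simp add: power2_eq_square algebra_simps)
    thus ?thesis using z by simp
  qed
  have e2: "- 2 * a * b + (a + b) * (a + a) - 2 * a * a = 0" "- 2 * a * b + (a + b) * (b + b) - 2 * b * b = 0"
    by (simp_all add: algebra_simps)
  have o1: "fodd f ((a - b) / 2) / (a - b) * (a - b) = fodd f ((a - b) / 2)" using z by simp
  have o2: "fodd f ((a - b) / 2) / (a - b) * (b - a) = - fodd f ((a - b) / 2)" using z
    by (simp add: field_simps)
  have s: "(b + a) = (a + b)" "b * a = a * b" by simp_all
  have ab: "C2 f a b a b = f ((a - b) / 2)"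
    unfolding C2_def o1 e1 using f_pos[of f "(a - b) / 2"] by simp
  have ba: "C2 f a b b a = f ((b - a) / 2)"
  proof -
    have "- 2 * a * b + (a + b) * (b + a) - 2 * b * a = - 2 * a * b + (a + b) * (a + b) - 2 * a * b"
      by (simp add: algebra_simps)
    hence "C2 f a b b a = f 0 - fodd f ((a - b) / 2) + feven f ((a - b) / 2)"
      unfolding C2_def o2 \<open>- 2 * a * b + (a + b) * (b + a) - 2 * b * a = _\<close> e1 by simp
    thus ?thesis by (simp only: n f_neg)
  qed
  have aa: "C2 f a b a a = f ((a - a) / 2)" unfolding C2_def e2(1) by simp
  have bb: "C2 f a b b b = f ((b - b) / 2)" unfolding C2_def e2(2) by simp
  show ?thesis using x y ab ba aa bb by auto
qed

lemma entry_simps: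
  "((A::real^'n^'n) + B) $ i $ j = A $ i $ j + B $ i $ j"
  "(A - B) $ i $ j = A $ i $ j - B $ i $ j"
  "(- A) $ i $ j = - (A $ i $ j)"
  "(c *\<^sub>R A) $ i $ j = c * A $ i $ j"
  by simp_all

lemma formula2_entry: assumes "a \<noteq> b" shows
  "(formula2 f a b (diagm g) Y) $ i $ j = C2 f a b (g $ i) (g $ j) * Y $ i $ j"
  unfolding formula2_def C2_def using assms
  by (simp only: entry_simps diag_left diag_right) (simp add: field_simps)

lemma formula3_entry:
  "(formula3 f a b c (diagm g) Y) $ i $ j = C3 f a b c (g $ i) (g $ j) * Y $ i $ j"
  unfolding formula3_def C3_def Let_def
  by (simp only: entry_simps diag_left diag_right diag_diag vec_lambda_beta) (simp add: algebra_simps power2_eq_square)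

lemma formula2_phi: assumes "orthogonal_matrix Q"
  shows "formula2 f a b (phi Q A) (phi Q B) = phi Q (formula2 f a b A B)"
  unfolding formula2_def by (simp only: phi_mult[OF assms] phi_add phi_sub phi_scale phi_neg)

lemma formula3_phi: assumes "orthogonal_matrix Q"
  shows "formula3 f a b c (phi Q A) (phi Q B) = phi Q (formula3 f a b c A B)"
  unfolding formula3_def Let_def by (simp only: phi_mult[OF assms] phi_add phi_sub phi_scale phi_neg)

lemma reduce:
  assumes Q: "orthogonal_matrix Q" and G: "G = Q ** diagm g ** transpose Q"
    and F: "\<And>A B. F (phi Q A) (phi Q B) = phi Q (F A B)"
    and E: "\<And>i j. f ((g $ i - g $ j) / 2) * (transpose Q ** X ** Q) $ i $ j = F (diagm g) (transpose Q ** X ** Q) $ i $ j"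
  shows "fAd f Q g X = F G X"
proof -
  define Y where "Y = transpose Q ** X ** Q"
  have X: "X = phi Q Y" using phi_inv[OF Q] by (simp add: Y_def)
  have G': "G = phi Q (diagm g)" using G by (simp add: phi_def)
  have "(\<chi> i j. f ((g $ i - g $ j) / 2) * Y $ i $ j) = F (diagm g) Y"
    using E by (simp add: vec_eq_iff Y_def)
  hence "fAd f Q g X = phi Q (F (diagm g) Y)" by (simp add: fAd_phi Y_def)
  also have "\<dots> = F G X" by (simp add: F X G')
  finally show ?thesis .
qed

lemma part1:
  fixes G :: "real^'n^'n"
  assumes Q: "orthogonal_matrix Q" and G: "G = Q ** diagm g ** transpose Q"
    and c: "CARD('n) = 1 \<or> (\<forall>i j. g $ i = g $ j)"
  shows "fAd f Q g X = f 0 *\<^sub>R X"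
proof -
  have gg: "g $ i = g $ j" for i j
  proof (cases "CARD('n) = 1")
    case True
    then obtain x where "(UNIV :: 'n set) = {x}" by (metis card_1_singletonE)
    hence "i = j" by (metis UNIV_I singletonD)
    thus ?thesis by simp
  next
    case False thus ?thesis using c by blast
  qed
  show ?thesis
  proof (rule reduce[OF Q G, where F = "\<lambda>A B. f 0 *\<^sub>R B"])
    fix i j
    have "f ((g $ i - g $ j) / 2) = f 0" using gg[of i j] by simp
    thus "f ((g $ i - g $ j) / 2) * (transpose Q ** X ** Q) $ i $ j = (f 0 *\<^sub>R (transpose Q ** X ** Q)) $ i $ j" by simp
  qed (simp add: phi_scale)
qed

lemma part2:
  fixes G :: "real^'n^'n"
  assumes Q: "orthogonal_matrix Q" and G: "G = Q ** diagm g ** transpose Q"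
    and d: "a \<noteq> b" and r: "\<And>i. g $ i = a \<or> g $ i = b"
  shows "fAd f Q g X = formula2 f a b G X"
  by (rule reduce[OF Q G]) (simp_all add: formula2_phi[OF Q] formula2_entry[OF d] C2_vals[OF d r r])

lemma part3:
  fixes G :: "real^3^3"
  assumes Q: "orthogonal_matrix Q" and G: "G = Q ** diagm g ** transpose Q"
    and d: "g $ 1 \<noteq> g $ 2" "g $ 2 \<noteq> g $ 3" "g $ 3 \<noteq> g $ 1"
  shows "fAd f Q g X = formula3 f (g $ 1) (g $ 2) (g $ 3) G X"
proof -
  have r: "g $ i = g $ 1 \<or> g $ i = g $ 2 \<or> g $ i = g $ 3" for i :: 3
    using exhaust_3[of i] by auto
  show ?thesis
    by (rule reduce[OF Q G]) (simp_all add: formula3_phi[OF Q] formula3_entry C3_vals[OF d r r])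
qed

theorem mainTheorem2:
  fixes f :: "real \<Rightarrow> real"
  shows
  "(\<forall>(G :: real^'n^'n) Q g X.
      transpose G = G \<and> orthogonal_matrix Q \<and> G = Q ** diagm g ** transpose Q \<and>
      (CARD('n) = 1 \<or> (\<forall>i j. g $ i = g $ j))
      \<longrightarrow> fAd f Q g X = f 0 *\<^sub>R X)
 \<and> (\<forall>(G :: real^2^2) Q g X.
      transpose G = G \<and> orthogonal_matrix Q \<and> G = Q ** diagm g ** transpose Q \<and>
      g $ 1 \<noteq> g $ 2
      \<longrightarrow> fAd f Q g X = formula2 f (g $ 1) (g $ 2) G X)
 \<and> (\<forall>(G :: real^3^3) Q g X.
      transpose G = G \<and> orthogonal_matrix Q \<and> G = Q ** diagm g ** transpose Q \<and>
      g $ 1 \<noteq> g $ 2 \<and> g $ 2 \<noteq> g $ 3 \<and> g $ 3 \<noteq> g $ 1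
      \<longrightarrow> fAd f Q g X = formula3 f (g $ 1) (g $ 2) (g $ 3) G X)
 \<and> (\<forall>(G :: real^3^3) Q g X a b.
      transpose G = G \<and> orthogonal_matrix Q \<and> G = Q ** diagm g ** transpose Q \<and>
      a \<noteq> b \<and> {g $ 1, g $ 2, g $ 3} = {a, b}
      \<longrightarrow> fAd f Q g X = formula2 f a b G X)"
  proof (intro conjI allI impI)
  fix G :: "real^'n^'n" and Q g X
  assume "transpose G = G \<and> orthogonal_matrix Q \<and> G = Q ** diagm g ** transpose Q \<and>
      (CARD('n) = 1 \<or> (\<forall>i j. g $ i = g $ j))"
  thus "fAd f Q g X = f 0 *\<^sub>R X" using part1 by blast
next
  fix G :: "real^2^2" and Q g X
  assume h: "transpose G = G \<and> orthogonal_matrix Q \<and> G = Q ** diagm g ** transpose Q \<and> g $ 1 \<noteq> g $ 2"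
  have r: "g $ i = g $ 1 \<or> g $ i = g $ 2" for i :: 2
    using exhaust_2[of i] by auto
  show "fAd f Q g X = formula2 f (g $ 1) (g $ 2) G X"
    using h part2[OF _ _ _ r] by blast
next
  fix G :: "real^3^3" and Q g X
  assume h: "transpose G = G \<and> orthogonal_matrix Q \<and> G = Q ** diagm g ** transpose Q \<and>
      g $ 1 \<noteq> g $ 2 \<and> g $ 2 \<noteq> g $ 3 \<and> g $ 3 \<noteq> g $ 1"
  thus "fAd f Q g X = formula3 f (g $ 1) (g $ 2) (g $ 3) G X" using part3 by blast
next
  fix G :: "real^3^3" and Q g X a b
  assume h: "transpose G = G \<and> orthogonal_matrix Q \<and> G = Q ** diagm g ** transpose Q \<and>
      a \<noteq> b \<and> {g $ 1, g $ 2, g $ 3} = {a, b}"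
  have r: "g $ i = a \<or> g $ i = b" for i :: 3
  proof -
    have "g $ i \<in> {g $ 1, g $ 2, g $ 3}" using exhaust_3[of i] by auto
    thus ?thesis using h by auto
  qed
  show "fAd f Q g X = formula2 f a b G X"
    using h part2[OF _ _ _ r] by blast
qed

end
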